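(* Let $I=I_{\mathbf a,\mathbf b}\subset S=K[x,y]$ be a nonzero monomial ideal. Then: (a) if $a_m>0$, then $\mathrm{v}_{\mathfrak{p}_x}(I^k)=k(a_m+b_m)-1$ for all $k\ge1$; (b) if $b_1>0$, then $\mathrm{v}_{\mathfrak{p}_y}(I^k)=k(a_1+b_1)-1$ for all $k\ge1$.
   Context: $S=K[x,y]$ over a field $K$, standard graded, $S_d$ its degree-$d$ component. Every nonzero monomial ideal $I$ of $S$ has minimal monomial generating set $\{x^{a_1}y^{b_1},\dots,x^{a_m}y^{b_m}\}$ with $a_1>\dots>a_m\ge0$ and $0\le b_1<\dots<b_m$; this is denoted $I=I_{\mathbf a,\mathbf b}$. $\mathfrak{p}_x=(x)$, $\mathfrak{p}_y=(y)$. For a graded ideal $J$ and $\mathfrak{p}\in\operatorname{Ass}(J)$, $\mathrm{v}_\mathfrak{p}(J)=\min\{d:\exists f\in S_d \text{ with } (J:f)=\mathfrak{p}\}$. *)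

theory Defs
  imports "HOL-Computational_Algebra.Polynomial"
begin

text \<open>S = K[x,y] is modelled as 'a poly poly: outer variable y, inner variable x.
  The coefficient of x^i y^j in f is coeff (coeff f j) i.\<close>

type_synonym 'a bipoly = "'a poly poly"

definition xy_mono :: "nat \<Rightarrow> nat \<Rightarrow> 'a::field bipoly" where
  "xy_mono i j = monom (monom 1 i) j"

definition homog :: "nat \<Rightarrow> 'a::field bipoly \<Rightarrow> bool" where
  "homog d f \<longleftrightarrow> (\<forall>i j. coeff (coeff f j) i \<noteq> 0 \<longrightarrow> i + j = d)"

definition is_ideal :: "'a::comm_ring_1 set \<Rightarrow> bool" where
  "is_ideal J \<longleftrightarrow> 0 \<in> J \<and> (\<forall>a\<in>J. \<forall>b\<in>J. a + b \<in> J) \<and> (\<forall>r. \<forall>a\<in>J. r * a \<in> J)"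

definition ideal_gen :: "'a::comm_ring_1 set \<Rightarrow> 'a set" where
  "ideal_gen G = \<Inter>{J. is_ideal J \<and> G \<subseteq> J}"

definition ideal_mult :: "'a::comm_ring_1 set \<Rightarrow> 'a set \<Rightarrow> 'a set" where
  "ideal_mult A B = ideal_gen {a * b | a b. a \<in> A \<and> b \<in> B}"

fun ideal_pow :: "'a::comm_ring_1 set \<Rightarrow> nat \<Rightarrow> 'a set" where
  "ideal_pow J 0 = UNIV"
| "ideal_pow J (Suc k) = ideal_mult J (ideal_pow J k)"

definition colon :: "'a::comm_ring_1 set \<Rightarrow> 'a \<Rightarrow> 'a set" where
  "colon J f = {g. g * f \<in> J}"

definition is_prime_ideal :: "'a::comm_ring_1 set \<Rightarrow> bool" where
  "is_prime_ideal P \<longleftrightarrow> is_ideal P \<and> P \<noteq> UNIV \<and> (\<forall>a b. a * b \<in> P \<longrightarrow> a \<in> P \<or> b \<in> P)"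

definition Ass :: "'a::comm_ring_1 set \<Rightarrow> 'a set set" where
  "Ass J = {P. is_prime_ideal P \<and> (\<exists>f. colon J f = P)}"

definition v_num :: "'a::field bipoly set \<Rightarrow> 'a bipoly set \<Rightarrow> nat" where
  "v_num P J = (LEAST d. \<exists>f. homog d f \<and> colon J f = P)"

definition p_x :: "'a::field bipoly set" where "p_x = ideal_gen {xy_mono 1 0}"
definition p_y :: "'a::field bipoly set" where "p_y = ideal_gen {xy_mono 0 1}"

definition I_ab :: "nat \<Rightarrow> (nat \<Rightarrow> nat) \<Rightarrow> (nat \<Rightarrow> nat) \<Rightarrow> 'a::field bipoly set" where
  "I_ab m a b = ideal_gen {xy_mono (a i) (b i) | i. i \<in> {1..m}}"

end

theory Submission imports Defs begin

definition cf :: "'a::field poly poly \<Rightarrow> nat \<Rightarrow> nat \<Rightarrow> 'a" where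
  "cf f i j = coeff (coeff f j) i"

definition mono_ideal :: "(nat \<times> nat) set \<Rightarrow> 'a::field bipoly set" where
  "mono_ideal E = {f. \<forall>i j. cf f i j \<noteq> 0 \<longrightarrow> (i,j) \<in> E}"

definition upc :: "(nat \<times> nat) set \<Rightarrow> bool" where
  "upc E \<longleftrightarrow> (\<forall>i j i' j'. (i,j)\<in>E \<longrightarrow> i \<le> i' \<longrightarrow> j \<le> j' \<longrightarrow> (i',j')\<in>E)"

definition upcl :: "(nat \<times> nat) set \<Rightarrow> (nat \<times> nat) set" where
  "upcl G = {(i,j). \<exists>p q. (p,q)\<in>G \<and> p \<le> i \<and> q \<le> j}"

definition psum :: "(nat \<times> nat) set \<Rightarrow> (nat \<times> nat) set \<Rightarrow> (nat \<times> nat) set" where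
  "psum A B = {(i,j). \<exists>p q r s. (p,q)\<in>A \<and> (r,s)\<in>B \<and> p+r \<le> i \<and> q+s \<le> j}"

lemma cf_mult: "cf (f*g) i j = (\<Sum>j1\<le>j. \<Sum>i1\<le>i. cf f i1 j1 * cf g (i-i1) (j-j1))"
  by (simp add: cf_def coeff_mult coeff_sum)

lemma mult_support:
  assumes "cf (f*g) i j \<noteq> 0"
  shows "\<exists>i1\<le>i. \<exists>j1\<le>j. cf f i1 j1 \<noteq> 0 \<and> cf g (i-i1) (j-j1) \<noteq> 0"
proof (rule ccontr)
  assume "\<not> ?thesis"
  hence "\<And>i1 j1. i1 \<le> i \<Longrightarrow> j1 \<le> j \<Longrightarrow> cf f i1 j1 * cf g (i-i1) (j-j1) = 0" by auto
  hence "cf (f*g) i j = 0" unfolding cf_mult by (simp add: sum.neutral)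
  with assms show False by simp
qed

lemma cf_add: "cf (f+g) i j = cf f i j + cf (g::'a::field bipoly) i j" by (simp add: cf_def)
lemma cf_0: "cf 0 i j = 0" by (simp add: cf_def)

lemma upc_UNIV: "upc UNIV" by (simp add: upc_def)
lemma upc_upcl: "upc (upcl G)" unfolding upc_def upcl_def by (auto intro: le_trans)
lemma upc_psum: "upc (psum A B)" unfolding upc_def psum_def by (fastforce intro: le_trans)

lemma ideal_mono_ideal: assumes "upc E" shows "is_ideal (mono_ideal E :: 'a::field bipoly set)"
  unfolding is_ideal_def
proof (intro conjI ballI allI)
  show "0 \<in> mono_ideal E" by (simp add: mono_ideal_def cf_0)
next
  fix x y :: "'a bipoly" assume "x \<in> mono_ideal E" "y \<in> mono_ideal E"
  thus "x + y \<in> mono_ideal E" unfolding mono_ideal_def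
    by (auto simp: cf_add) (metis add.right_neutral add_0)
next
  fix r x :: "'a bipoly" assume x: "x \<in> mono_ideal E"
  show "r * x \<in> mono_ideal E" unfolding mono_ideal_def
  proof (intro CollectI allI impI)
    fix i j assume "cf (r*x) i j \<noteq> 0"
    then obtain i1 j1 where "i1 \<le> i" "j1 \<le> j" "cf x (i-i1) (j-j1) \<noteq> 0"
      using mult_support by blast
    hence "(i-i1, j-j1) \<in> E" using x by (auto simp: mono_ideal_def)
    thus "(i,j) \<in> E" using assms unfolding upc_def by (meson diff_le_self)
  qed
qed

lemma cf_xy_mono: "cf (xy_mono p q) i j = (if i = p \<and> j = q then 1 else 0)"
  by (simp add: cf_def xy_mono_def coeff_monom)

lemma cf_xy_mono_mult: "cf (xy_mono p q * f) i j = (if p \<le> i \<and> q \<le> j then cf f (i-p) (j-q) else 0)"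
  by (simp add: cf_def xy_mono_def coeff_monom_mult)

lemma xy_mono_mult: "xy_mono a b * xy_mono c d = xy_mono (a+c) (b+d)"
  by (simp add: xy_mono_def mult_monom)

lemma ideal_sum: assumes "is_ideal J" "finite A" "\<And>x. x \<in> A \<Longrightarrow> g x \<in> J"
  shows "sum g A \<in> J"
  using assms(2,3)
proof (induction A rule: finite_induct)
  case empty then show ?case using assms(1) by (simp add: is_ideal_def)
next
  case (insert x F) then show ?case using assms(1) by (simp add: is_ideal_def)
qed

lemma cf_const_mult: "cf (monom [:c:] 0 * f) i j = c * cf f i j"
  by (simp add: cf_def coeff_monom_mult)

lemma cf_sum: "cf (sum g A) i j = (\<Sum>x\<in>A. cf (g x) i j)"
  by (simp add: cf_def coeff_sum)

lemma bound_exists: "\<exists>N. \<forall>i j. cf (f::'a::field bipoly) i j \<noteq> 0 \<longrightarrow> i \<le> N \<and> j \<le> N"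
proof -
  define N where "N = degree f + (\<Sum>j\<le>degree f. degree (coeff f j))"
  have "cf f i j \<noteq> 0 \<longrightarrow> i \<le> N \<and> j \<le> N" for i j
  proof
    assume h: "cf f i j \<noteq> 0"
    hence c: "coeff f j \<noteq> 0" by (auto simp: cf_def)
    hence jd: "j \<le> degree f" by (simp add: le_degree)
    have "i \<le> degree (coeff f j)" using h by (simp add: cf_def le_degree)
    also have "\<dots> \<le> (\<Sum>j\<le>degree f. degree (coeff f j))"
      using jd by (intro member_le_sum) auto
    finally show "i \<le> N \<and> j \<le> N" using jd unfolding N_def by simp
  qed
  thus ?thesis by blast
qed

lemma decomp: fixes f :: "'a::field bipoly"
  assumes "\<forall>i j. cf f i j \<noteq> 0 \<longrightarrow> i \<le> N \<and> j \<le> N"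
  shows "f = (\<Sum>j\<le>N. \<Sum>i\<le>N. monom [:cf f i j:] 0 * xy_mono i j)"
    (is "f = ?S")
proof -
  have eq: "cf f i' j' = cf ?S i' j'" for i' j'
  proof -
    have "cf ?S i' j' = (\<Sum>j\<le>N. \<Sum>i\<le>N. cf f i j * (if i' = i \<and> j' = j then 1 else 0))"
      by (simp add: cf_sum cf_const_mult cf_xy_mono)
    also have "\<dots> = (\<Sum>j\<le>N. if j' = j then (\<Sum>i\<le>N. if i' = i then cf f i j else 0) else 0)"
    proof (rule sum.cong[OF refl])
      fix j show "(\<Sum>i\<le>N. cf f i j * (if i' = i \<and> j' = j then 1 else 0)) =
          (if j' = j then (\<Sum>i\<le>N. if i' = i then cf f i j else 0) else 0)"
      proof (cases "j' = j")
        case True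
        have "(\<lambda>i. cf f i j * (if i' = i \<and> j' = j then 1 else 0)) = (\<lambda>i. if i' = i then cf f i j else 0)"
          using True by (intro ext) simp
        thus ?thesis using True by (simp only: if_True simp_thms)
      next
        case False thus ?thesis by simp
      qed
    qed
    also have "\<dots> = (if i' \<le> N \<and> j' \<le> N then cf f i' j' else 0)"
      by (simp add: sum.delta')
    also have "\<dots> = cf f i' j'" using assms by auto
    finally show ?thesis by simp
  qed
  show ?thesis
  proof (intro poly_eqI)
    fix n i show "coeff (coeff f n) i = coeff (coeff ?S n) i"
      using eq[of i n] unfolding cf_def .
  qed
qed

lemma mono_ideal_sub:
  assumes J: "is_ideal J" and g: "\<And>i j. (i,j) \<in> E \<Longrightarrow> xy_mono i j \<in> J"
  shows "mono_ideal E \<subseteq> J"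
proof
  fix f :: "'a bipoly" assume f: "f \<in> mono_ideal E"
  obtain N where N: "\<forall>i j. cf f i j \<noteq> 0 \<longrightarrow> i \<le> N \<and> j \<le> N" using bound_exists by blast
  have "(\<Sum>j\<le>N. \<Sum>i\<le>N. monom [:cf f i j:] 0 * xy_mono i j) \<in> J"
  proof (rule ideal_sum[OF J], simp, rule ideal_sum[OF J], simp)
    fix i j
    show "monom [:cf f i j:] 0 * xy_mono i j \<in> J"
    proof (cases "cf f i j = 0")
      case True then show ?thesis using J by (simp add: is_ideal_def)
    next
      case False
      then have "(i,j) \<in> E" using f by (auto simp: mono_ideal_def)
      then show ?thesis using J g by (simp add: is_ideal_def)
    qed
  qed
  thus "f \<in> J" using decomp[OF N] by simp
qed

lemma is_ideal_gen: "is_ideal (ideal_gen G)"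
  unfolding ideal_gen_def is_ideal_def by auto

lemma ideal_multc: "is_ideal J \<Longrightarrow> x \<in> J \<Longrightarrow> r * x \<in> J"
  by (simp add: is_ideal_def)

lemma gen_sub: "is_ideal J \<Longrightarrow> G \<subseteq> J \<Longrightarrow> ideal_gen G \<subseteq> J"
  unfolding ideal_gen_def by auto

lemma gen_base: "G \<subseteq> ideal_gen G"
  unfolding ideal_gen_def by auto

lemma xy_in_mono: "(p,q) \<in> E \<Longrightarrow> xy_mono p q \<in> mono_ideal E"
  by (auto simp: mono_ideal_def cf_xy_mono)

lemma gen_mono: "ideal_gen {xy_mono p q | p q. (p,q) \<in> G} = (mono_ideal (upcl G) :: 'a::field bipoly set)"
proof
  show "ideal_gen {xy_mono p q | p q. (p,q) \<in> G} \<subseteq> (mono_ideal (upcl G) :: 'a bipoly set)"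
    by (rule gen_sub[OF ideal_mono_ideal[OF upc_upcl]]) (auto intro!: xy_in_mono simp: upcl_def)
next
  show "(mono_ideal (upcl G) :: 'a bipoly set) \<subseteq> ideal_gen {xy_mono p q | p q. (p,q) \<in> G}"
  proof (rule mono_ideal_sub[OF is_ideal_gen])
    fix i j assume "(i,j) \<in> upcl G"
    then obtain p q where pq: "(p,q) \<in> G" "p \<le> i" "q \<le> j" by (auto simp: upcl_def)
    have "xy_mono p q \<in> {xy_mono p q | p q. (p,q) \<in> G}"
      using pq(1) by blast
    hence "xy_mono p q \<in> ideal_gen {xy_mono p q | p q. (p,q) \<in> G}"
      using gen_base by (rule subsetD[rotated])
    hence "xy_mono (i-p) (j-q) * xy_mono p q \<in> ideal_gen {xy_mono p q | p q. (p,q) \<in> G}"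
      by (rule ideal_multc[OF is_ideal_gen])
    thus "xy_mono i j \<in> ideal_gen {xy_mono p q | p q. (p,q) \<in> G}"
      using pq by (simp add: xy_mono_mult)
  qed
qed

lemma mult_mono: assumes "upc A" "upc B"
  shows "ideal_mult (mono_ideal A) (mono_ideal B) = (mono_ideal (psum A B) :: 'a::field bipoly set)"
proof
  show "ideal_mult (mono_ideal A) (mono_ideal B) \<subseteq> (mono_ideal (psum A B) :: 'a bipoly set)"
    unfolding ideal_mult_def
  proof (rule gen_sub[OF ideal_mono_ideal[OF upc_psum]], safe)
    fix x y :: "'a bipoly" assume x: "x \<in> mono_ideal A" and y: "y \<in> mono_ideal B"
    show "x * y \<in> mono_ideal (psum A B)" unfolding mono_ideal_def
    proof (intro CollectI allI impI)
      fix i j assume "cf (x*y) i j \<noteq> 0"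
      then obtain i1 j1 where h: "i1 \<le> i" "j1 \<le> j" "cf x i1 j1 \<noteq> 0" "cf y (i-i1) (j-j1) \<noteq> 0"
        using mult_support by blast
      hence "(i1,j1) \<in> A" "(i-i1,j-j1) \<in> B" using x y by (auto simp: mono_ideal_def)
      moreover have "i1 + (i-i1) \<le> i" "j1 + (j-j1) \<le> j" using h(1,2) by simp_all
      ultimately show "(i,j) \<in> psum A B" unfolding psum_def by blast
    qed
  qed
next
  show "(mono_ideal (psum A B) :: 'a bipoly set) \<subseteq> ideal_mult (mono_ideal A) (mono_ideal B)"
    unfolding ideal_mult_def
  proof (rule mono_ideal_sub[OF is_ideal_gen])
    fix i j assume "(i,j) \<in> psum A B"
    then obtain p q r s where h: "(p,q)\<in>A" "(r,s)\<in>B" "p+r \<le> i" "q+s \<le> j"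
      by (auto simp: psum_def)
    let ?G = "{a * b |a b. a \<in> (mono_ideal A :: 'a bipoly set) \<and> b \<in> mono_ideal B}"
    have "xy_mono p q * xy_mono r s \<in> ?G" using h xy_in_mono by blast
    hence "xy_mono p q * xy_mono r s \<in> ideal_gen ?G"
      using gen_base by (rule subsetD[rotated])
    hence "xy_mono (i-p-r) (j-q-s) * (xy_mono p q * xy_mono r s) \<in> ideal_gen ?G"
      by (rule ideal_multc[OF is_ideal_gen])
    thus "xy_mono i j \<in> ideal_gen ?G" using h by (simp add: xy_mono_mult)
  qed
qed

lemma mono_UNIV: "mono_ideal UNIV = UNIV" by (simp add: mono_ideal_def)

fun Ek :: "(nat \<times> nat) set \<Rightarrow> nat \<Rightarrow> (nat \<times> nat) set" where
  "Ek G 0 = UNIV"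
| "Ek G (Suc k) = psum (upcl G) (Ek G k)"

lemma upc_Ek: "upc (Ek G k)" by (cases k) (simp_all add: upc_UNIV upc_psum)

lemma pow_mono: "ideal_pow (mono_ideal (upcl G) :: 'a::field bipoly set) k = mono_ideal (Ek G k)"
  by (induction k) (simp_all add: mono_UNIV mult_mono upc_upcl upc_Ek)

lemma colon_xy: "colon (mono_ideal E) (xy_mono p q) = (mono_ideal {(i,j). (i+p, j+q) \<in> E} :: 'a::field bipoly set)"
proof -
  have "g * xy_mono p q \<in> mono_ideal E \<longleftrightarrow> g \<in> mono_ideal {(i,j). (i+p, j+q) \<in> E}" for g :: "'a bipoly"
  proof
    assume h: "g * xy_mono p q \<in> mono_ideal E"
    have "\<forall>i j. cf g i j \<noteq> 0 \<longrightarrow> (i+p, j+q) \<in> E"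
    proof (intro allI impI)
      fix i j assume "cf g i j \<noteq> 0"
      hence "cf (xy_mono p q * g) (i+p) (j+q) \<noteq> 0" by (simp add: cf_xy_mono_mult)
      thus "(i+p, j+q) \<in> E" using h by (auto simp: mono_ideal_def mult.commute)
    qed
    thus "g \<in> mono_ideal {(i,j). (i+p, j+q) \<in> E}" by (simp add: mono_ideal_def)
  next
    assume h: "g \<in> mono_ideal {(i,j). (i+p, j+q) \<in> E}"
    show "g * xy_mono p q \<in> mono_ideal E" unfolding mono_ideal_def
    proof (intro CollectI allI impI)
      fix i j assume "cf (g * xy_mono p q) i j \<noteq> 0"
      hence "cf (xy_mono p q * g) i j \<noteq> 0" by (simp add: mult.commute)
      hence "p \<le> i" "q \<le> j" "cf g (i-p) (j-q) \<noteq> 0" by (auto simp: cf_xy_mono_mult split: if_splits)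
      moreover have "(i-p+p, j-q+q) \<in> E" using h \<open>cf g (i-p) (j-q) \<noteq> 0\<close>
        unfolding mono_ideal_def by blast
      ultimately show "(i,j) \<in> E" by simp
    qed
  qed
  thus ?thesis by (auto simp: colon_def)
qed

lemma homog_xy: "homog (p+q) (xy_mono p q)"
  by (auto simp: homog_def xy_mono_def coeff_monom split: if_splits)

lemma cf_xy_mono_mult': "cf (xy_mono p q * f) (i+p) (j+q) = cf f i j"
  by (simp add: cf_xy_mono_mult)


lemma Ek_Suc_elim: "(i,j) \<in> Ek G (Suc k) \<Longrightarrow>
   \<exists>p q r s. (p,q)\<in>G \<and> (r,s)\<in>Ek G k \<and> p+r \<le> i \<and> q+s \<le> j"
  by (auto simp: psum_def upcl_def) (meson add_le_mono le_trans order_refl)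

lemma Ek_Suc_intro: "(p,q)\<in>G \<Longrightarrow> (r,s)\<in>Ek G k \<Longrightarrow> (p+r,q+s) \<in> Ek G (Suc k)"
  by (auto simp: psum_def upcl_def)

lemma upcE: "upc E \<Longrightarrow> (i,j)\<in>E \<Longrightarrow> i \<le> i' \<Longrightarrow> j \<le> j' \<Longrightarrow> (i',j')\<in>E"
  unfolding upc_def by blast

definition G1 :: "nat \<Rightarrow> (nat \<Rightarrow> nat) \<Rightarrow> (nat \<Rightarrow> nat) \<Rightarrow> (nat \<times> nat) set" where
  "G1 m a b = {(a i, b i) | i. i \<in> {1..m}}"

lemma I_ab_mono: "I_ab m a b = (mono_ideal (upcl (G1 m a b)) :: 'a::field bipoly set)"
proof -
  have "{xy_mono (a i) (b i) | i. i \<in> {1..m}} = {xy_mono p q | p q. (p,q) \<in> G1 m a b}"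
    by (auto simp: G1_def)
  note eq = this
  show ?thesis unfolding I_ab_def eq by (rule gen_mono)
qed

context
  fixes m :: nat and a b :: "nat \<Rightarrow> nat"
  assumes m1: "m \<ge> 1"
    and H: "\<And>i j. 1 \<le> i \<Longrightarrow> i < j \<Longrightarrow> j \<le> m \<Longrightarrow> a i > a j \<and> b i < b j"
begin

lemma G1_am: "(p,q) \<in> G1 m a b \<Longrightarrow> a m \<le> p \<and> (p \<le> a m \<longrightarrow> p = a m \<and> q = b m)"
  unfolding G1_def using H by (auto) (metis le_eq_less_or_eq less_imp_le_nat not_le)+

lemma G1_b1: "(p,q) \<in> G1 m a b \<Longrightarrow> b 1 \<le> q \<and> (q \<le> b 1 \<longrightarrow> p = a 1 \<and> q = b 1)"
  unfolding G1_def using H by (auto) (metis le_eq_less_or_eq less_imp_le_nat not_le)+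

lemma G1_m: "(a m, b m) \<in> G1 m a b" using m1 by (auto simp: G1_def)
lemma G1_1: "(a 1, b 1) \<in> G1 m a b" using m1 by (auto simp: G1_def)

lemma C1: "(i,j) \<in> Ek (G1 m a b) k \<Longrightarrow> k * a m \<le> i"
proof (induction k arbitrary: i j)
  case 0 then show ?case by simp
next
  case (Suc k)
  then obtain p q r s where "(p,q)\<in>G1 m a b" "(r,s)\<in>Ek (G1 m a b) k" "p+r \<le> i" "q+s \<le> j"
    using Ek_Suc_elim by blast
  then show ?case using Suc.IH G1_am by fastforce
qed

lemma C2: "(k * a m, k * b m) \<in> Ek (G1 m a b) k"
  by (induction k) (auto dest: Ek_Suc_intro[OF G1_m])

lemma C3: "(i,j) \<in> Ek (G1 m a b) k \<Longrightarrow> i \<le> k * a m \<Longrightarrow> k * b m \<le> j"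
proof (induction k arbitrary: i j)
  case 0 then show ?case by simp
next
  case (Suc k)
  then obtain p q r s where h: "(p,q)\<in>G1 m a b" "(r,s)\<in>Ek (G1 m a b) k" "p+r \<le> i" "q+s \<le> j"
    using Ek_Suc_elim by blast
  have "k * a m \<le> r" using C1 h(2) .
  moreover have "a m \<le> p" using G1_am h(1) by blast
  ultimately have "p \<le> a m" "r \<le> k * a m" using Suc.prems(2) h(3) by auto
  then have "q = b m" "k * b m \<le> s" using G1_am h(1) Suc.IH h(2) by auto
  then show ?case using h(4) by simp
qed

lemma D1: "(i,j) \<in> Ek (G1 m a b) k \<Longrightarrow> k * b 1 \<le> j"
proof (induction k arbitrary: i j)
  case 0 then show ?case by simp
next
  case (Suc k)
  then obtain p q r s where "(p,q)\<in>G1 m a b" "(r,s)\<in>Ek (G1 m a b) k" "p+r \<le> i" "q+s \<le> j"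
    using Ek_Suc_elim by blast
  then show ?case using Suc.IH G1_b1 by fastforce
qed

lemma D2: "(k * a 1, k * b 1) \<in> Ek (G1 m a b) k"
  by (induction k) (auto dest: Ek_Suc_intro[OF G1_1])

lemma D3: "(i,j) \<in> Ek (G1 m a b) k \<Longrightarrow> j \<le> k * b 1 \<Longrightarrow> k * a 1 \<le> i"
proof (induction k arbitrary: i j)
  case 0 then show ?case by simp
next
  case (Suc k)
  then obtain p q r s where h: "(p,q)\<in>G1 m a b" "(r,s)\<in>Ek (G1 m a b) k" "p+r \<le> i" "q+s \<le> j"
    using Ek_Suc_elim by blast
  have "k * b 1 \<le> s" using D1 h(2) .
  moreover have "b 1 \<le> q" using G1_b1 h(1) by blast
  ultimately have "q \<le> b 1" "s \<le> k * b 1" using Suc.prems(2) h(4) by auto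
  then have "p = a 1" "k * a 1 \<le> r" using G1_b1 h(1) Suc.IH h(2) by auto
  then show ?case using h(3) by simp
qed

end


definition X0 :: "(nat \<times> nat) set" where "X0 = {(i,j). 1 \<le> i}"
definition Y0 :: "(nat \<times> nat) set" where "Y0 = {(i,j). 1 \<le> j}"

lemma upc_X0: "upc X0" by (auto simp: upc_def X0_def)
lemma upc_Y0: "upc Y0" by (auto simp: upc_def Y0_def)

lemma px_mono: "p_x = (mono_ideal X0 :: 'a::field bipoly set)"
proof -
  have e1: "{xy_mono 1 0} = {xy_mono p q | p q. (p,q) \<in> {(1::nat,0::nat)}}" by auto
  have e2: "upcl {(1::nat,0::nat)} = X0" by (auto simp: upcl_def X0_def)
  have g: "ideal_gen {xy_mono p q | p q. (p,q) \<in> {(1::nat,0::nat)}} = (mono_ideal (upcl {(1::nat,0::nat)}) :: 'a bipoly set)"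
    by (rule gen_mono)
  show ?thesis unfolding p_x_def e1 g e2 by (rule refl)
qed

lemma py_mono: "p_y = (mono_ideal Y0 :: 'a::field bipoly set)"
proof -
  have e1: "{xy_mono 0 1} = {xy_mono p q | p q. (p,q) \<in> {(0::nat,1::nat)}}" by auto
  have e2: "upcl {(0::nat,1::nat)} = Y0" by (auto simp: upcl_def Y0_def)
  have g: "ideal_gen {xy_mono p q | p q. (p,q) \<in> {(0::nat,1::nat)}} = (mono_ideal (upcl {(0::nat,1::nat)}) :: 'a bipoly set)"
    by (rule gen_mono)
  show ?thesis unfolding p_y_def e1 g e2 by (rule refl)
qed

definition hx :: "'a::field bipoly \<Rightarrow> 'a poly" where
  "hx f = map_poly (\<lambda>p. coeff p 0) f"

lemma coeff_hx: "coeff (hx f) j = cf f 0 j"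
  by (simp add: hx_def cf_def coeff_map_poly)

lemma hx_mult: "hx (f * g) = hx f * hx g"
proof (rule poly_eqI)
  fix n
  show "coeff (hx (f*g)) n = coeff (hx f * hx g) n"
    by (simp add: coeff_hx cf_mult coeff_mult)
qed

lemma X0_iff: "f \<in> mono_ideal X0 \<longleftrightarrow> hx f = 0"
proof -
  have "f \<in> mono_ideal X0 \<longleftrightarrow> (\<forall>j. cf f 0 j = 0)"
  proof -
    have "f \<in> mono_ideal X0 \<longleftrightarrow> (\<forall>i j. cf f i j \<noteq> 0 \<longrightarrow> 1 \<le> i)"
      by (simp add: mono_ideal_def X0_def)
    also have "\<dots> \<longleftrightarrow> (\<forall>j. cf f 0 j = 0)"
    proof
      assume A: "\<forall>i j. cf f i j \<noteq> 0 \<longrightarrow> 1 \<le> i"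
      show "\<forall>j. cf f 0 j = 0"
      proof
        fix j show "cf f 0 j = 0" using A by fastforce
      qed
    next
      assume A: "\<forall>j. cf f 0 j = 0"
      show "\<forall>i j. cf f i j \<noteq> 0 \<longrightarrow> 1 \<le> i"
      proof (intro allI impI)
        fix i j assume "cf f i j \<noteq> 0"
        thus "1 \<le> i" using A by (cases i) auto
      qed
    qed
    finally show ?thesis .
  qed
  also have "\<dots> \<longleftrightarrow> hx f = 0" by (simp add: poly_eq_iff coeff_hx)
  finally show ?thesis .
qed

lemma Y0_iff: "f \<in> mono_ideal Y0 \<longleftrightarrow> coeff f 0 = 0"
proof -
  have "f \<in> mono_ideal Y0 \<longleftrightarrow> (\<forall>i. cf f i 0 = 0)"
  proof -
    have "f \<in> mono_ideal Y0 \<longleftrightarrow> (\<forall>i j. cf f i j \<noteq> 0 \<longrightarrow> 1 \<le> j)"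
      by (simp add: mono_ideal_def Y0_def)
    also have "\<dots> \<longleftrightarrow> (\<forall>i. cf f i 0 = 0)"
    proof
      assume A: "\<forall>i j. cf f i j \<noteq> 0 \<longrightarrow> 1 \<le> j"
      show "\<forall>i. cf f i 0 = 0"
      proof
        fix i show "cf f i 0 = 0" using A by fastforce
      qed
    next
      assume A: "\<forall>i. cf f i 0 = 0"
      show "\<forall>i j. cf f i j \<noteq> 0 \<longrightarrow> 1 \<le> j"
      proof (intro allI impI)
        fix i j assume "cf f i j \<noteq> 0"
        thus "1 \<le> j" using A by (cases j) auto
      qed
    qed
    finally show ?thesis .
  qed
  also have "\<dots> \<longleftrightarrow> coeff f 0 = 0" by (simp add: poly_eq_iff cf_def)
  finally show ?thesis .
qed

lemma one_notin: "(1::'a::field bipoly) \<notin> mono_ideal X0" "(1::'a::field bipoly) \<notin> mono_ideal Y0"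
  by (auto simp: mono_ideal_def X0_def Y0_def cf_def intro!: exI[of _ 0])

lemma prime_X0: "is_prime_ideal (mono_ideal X0 :: 'a::field bipoly set)"
  unfolding is_prime_ideal_def
  using ideal_mono_ideal[OF upc_X0] one_notin by (auto simp: X0_iff hx_mult)

lemma prime_Y0: "is_prime_ideal (mono_ideal Y0 :: 'a::field bipoly set)"
  unfolding is_prime_ideal_def
proof (intro conjI)
  show "is_ideal (mono_ideal Y0 :: 'a bipoly set)" by (rule ideal_mono_ideal[OF upc_Y0])
  show "(mono_ideal Y0 :: 'a bipoly set) \<noteq> UNIV" using one_notin(2) by blast
  show "\<forall>x y. x * y \<in> (mono_ideal Y0 :: 'a bipoly set) \<longrightarrow> x \<in> mono_ideal Y0 \<or> y \<in> mono_ideal Y0"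
    by (simp add: Y0_iff coeff_mult_0)
qed


context
  fixes m :: nat and a b :: "nat \<Rightarrow> nat"
  assumes m1: "m \<ge> 1"
    and H: "\<And>i j. 1 \<le> i \<Longrightarrow> i < j \<Longrightarrow> j \<le> m \<Longrightarrow> a i > a j \<and> b i < b j"
begin

lemma x_part:
  assumes am: "a m > 0" and k1: "k \<ge> 1"
  shows "p_x \<in> Ass (mono_ideal (Ek (G1 m a b) k) :: 'a::field bipoly set) \<and>
         v_num p_x (mono_ideal (Ek (G1 m a b) k) :: 'a bipoly set) = k * (a m + b m) - 1"
proof -
  define E where "E = Ek (G1 m a b) k"
  define J where "J = (mono_ideal E :: 'a bipoly set)"
  have km: "1 \<le> k * a m" using am k1 by simp
  have upE: "upc E" unfolding E_def by (rule upc_Ek)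
  have c1: "\<And>i j. (i,j) \<in> E \<Longrightarrow> k * a m \<le> i" unfolding E_def using C1[where m=m and a=a and b=b, OF m1 H] by blast
  have c2: "(k * a m, k * b m) \<in> E" unfolding E_def using C2[where m=m and a=a and b=b, OF m1 H] by blast
  have c3: "\<And>i j. (i,j) \<in> E \<Longrightarrow> i \<le> k * a m \<Longrightarrow> k * b m \<le> j"
    unfolding E_def using C3[where m=m and a=a and b=b, OF m1 H] by blast
  have seteq: "{(i,j). (i + (k*a m - 1), j + k*b m) \<in> E} = X0"
  proof (safe)
    fix i j assume "(i + (k*a m - 1), j + k*b m) \<in> E"
    then have "k * a m \<le> i + (k*a m - 1)" using c1 by blast
    then have "1 \<le> i" using km by linarith
    then show "(i,j) \<in> X0" by (simp add: X0_def)
  next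
    fix i j assume "(i,j) \<in> X0"
    then have "1 \<le> i" by (simp add: X0_def)
    then have "k * a m \<le> i + (k*a m - 1)" by linarith
    then show "(i + (k*a m - 1), j + k*b m) \<in> E" using upcE[OF upE c2] by auto
  qed
  have col: "colon J (xy_mono (k*a m - 1) (k*b m)) = p_x"
    unfolding J_def px_mono colon_xy seteq ..
  have deq: "k * (a m + b m) - 1 = (k*a m - 1) + k*b m" using km by (simp add: algebra_simps)
  have hom: "homog (k * (a m + b m) - 1) (xy_mono (k*a m - 1) (k*b m) :: 'a bipoly)"
    unfolding deq by (rule homog_xy)
  have lower: "k * (a m + b m) - 1 \<le> d" if hd: "homog d f" and cf: "colon J f = p_x" for d f
  proof -
    have cf': "colon J f = mono_ideal X0" using cf px_mono by simp
    have "\<exists>c e. cf f c e \<noteq> 0 \<and> c < k * a m"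
    proof (rule ccontr)
      assume "\<not> ?thesis"
      hence big: "\<And>c e. cf f c e \<noteq> 0 \<Longrightarrow> k * a m \<le> c" by (meson not_le)
      have "xy_mono 0 (k * b m) * f \<in> J" unfolding J_def mono_ideal_def
      proof (intro CollectI allI impI)
        fix i j assume "cf (xy_mono 0 (k * b m) * f) i j \<noteq> 0"
        hence "k * b m \<le> j" "cf f i (j - k * b m) \<noteq> 0"
          by (auto simp: cf_xy_mono_mult split: if_splits)
        hence "k * a m \<le> i" "k * b m \<le> j" using big by auto
        thus "(i,j) \<in> E" using upcE[OF upE c2] by blast
      qed
      hence "xy_mono 0 (k * b m) \<in> colon J f" unfolding colon_def by simp
      hence "(xy_mono 0 (k * b m) :: 'a bipoly) \<in> mono_ideal X0" using cf' by simp
      then have "\<forall>i j. cf (xy_mono 0 (k * b m) :: 'a bipoly) i j \<noteq> 0 \<longrightarrow> (i,j) \<in> X0"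
        by (simp add: mono_ideal_def)
      from this[rule_format, of 0 "k * b m"] show False by (simp add: cf_xy_mono X0_def)
    qed
    then obtain c e where ce: "cf f c e \<noteq> 0" "c < k * a m" by blast
    have "(xy_mono 1 0 :: 'a bipoly) \<in> mono_ideal X0" by (rule xy_in_mono) (simp add: X0_def)
    hence "xy_mono 1 0 \<in> colon J f" using cf' by simp
    hence "xy_mono 1 0 * f \<in> J" by (simp add: colon_def)
    moreover have "cf (xy_mono 1 0 * f) (c+1) (e+0) \<noteq> 0" using ce by (simp add: cf_xy_mono_mult)
    ultimately have "(c+1, e) \<in> E" by (auto simp: J_def mono_ideal_def)
    hence "k * a m \<le> c + 1" "k * b m \<le> e" using c1 c3 ce(2) by auto
    moreover have "c + e = d" using hd ce(1) by (auto simp: homog_def cf_def)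
    ultimately show ?thesis using add_mult_distrib2[of k "a m" "b m"] by linarith
  qed
  have "v_num p_x J = k * (a m + b m) - 1"
    unfolding v_num_def
    by (rule Least_equality) (use hom col lower in auto)
  moreover have pp: "is_prime_ideal (p_x :: 'a bipoly set)" unfolding px_mono by (rule prime_X0)
  hence "p_x \<in> Ass J" unfolding Ass_def using col by blast
  ultimately show ?thesis unfolding J_def E_def by simp
qed

lemma y_part:
  assumes bpos: "b 1 > 0" and k1: "k \<ge> 1"
  shows "p_y \<in> Ass (mono_ideal (Ek (G1 m a b) k) :: 'a::field bipoly set) \<and>
         v_num p_y (mono_ideal (Ek (G1 m a b) k) :: 'a bipoly set) = k * (a 1 + b 1) - 1"
proof -
  define E where "E = Ek (G1 m a b) k"
  define J where "J = (mono_ideal E :: 'a bipoly set)"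
  have kb: "1 \<le> k * b 1" using bpos k1 by simp
  have upE: "upc E" unfolding E_def by (rule upc_Ek)
  have d1: "\<And>i j. (i,j) \<in> E \<Longrightarrow> k * b 1 \<le> j" unfolding E_def using D1[where m=m and a=a and b=b, OF m1 H] by blast
  have d2: "(k * a 1, k * b 1) \<in> E" unfolding E_def using D2[where m=m and a=a and b=b, OF m1 H] by blast
  have d3: "\<And>i j. (i,j) \<in> E \<Longrightarrow> j \<le> k * b 1 \<Longrightarrow> k * a 1 \<le> i"
    unfolding E_def using D3[where m=m and a=a and b=b, OF m1 H] by blast
  have seteq: "{(i,j). (i + k*a 1, j + (k*b 1 - 1)) \<in> E} = Y0"
  proof (safe)
    fix i j assume "(i + k*a 1, j + (k*b 1 - 1)) \<in> E"
    then have "k * b 1 \<le> j + (k*b 1 - 1)" using d1 by blast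
    then have "1 \<le> j" using kb by linarith
    then show "(i,j) \<in> Y0" by (simp add: Y0_def)
  next
    fix i j assume "(i,j) \<in> Y0"
    then have "1 \<le> j" by (simp add: Y0_def)
    then have "k * b 1 \<le> j + (k*b 1 - 1)" by linarith
    then show "(i + k*a 1, j + (k*b 1 - 1)) \<in> E" using upcE[OF upE d2] by auto
  qed
  have col: "colon J (xy_mono (k*a 1) (k*b 1 - 1)) = p_y"
    unfolding J_def py_mono colon_xy seteq ..
  have deq: "k * (a 1 + b 1) - 1 = k*a 1 + (k*b 1 - 1)" using kb by (simp add: algebra_simps)
  have hom: "homog (k * (a 1 + b 1) - 1) (xy_mono (k*a 1) (k*b 1 - 1) :: 'a bipoly)"
    unfolding deq by (rule homog_xy)
  have lower: "k * (a 1 + b 1) - 1 \<le> d" if hd: "homog d f" and cf: "colon J f = p_y" for d f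
  proof -
    have cf': "colon J f = mono_ideal Y0" using cf py_mono by simp
    have "\<exists>c e. cf f c e \<noteq> 0 \<and> e < k * b 1"
    proof (rule ccontr)
      assume "\<not> ?thesis"
      hence big: "\<And>c e. cf f c e \<noteq> 0 \<Longrightarrow> k * b 1 \<le> e" by (meson not_le)
      have "xy_mono (k * a 1) 0 * f \<in> J" unfolding J_def mono_ideal_def
      proof (intro CollectI allI impI)
        fix i j assume "cf (xy_mono (k * a 1) 0 * f) i j \<noteq> 0"
        hence "k * a 1 \<le> i" "cf f (i - k * a 1) j \<noteq> 0"
          by (auto simp: cf_xy_mono_mult split: if_splits)
        hence "k * a 1 \<le> i" "k * b 1 \<le> j" using big by auto
        thus "(i,j) \<in> E" using upcE[OF upE d2] by blast
      qed
      hence "xy_mono (k * a 1) 0 \<in> colon J f" unfolding colon_def by simp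
      hence "(xy_mono (k * a 1) 0 :: 'a bipoly) \<in> mono_ideal Y0" using cf' by simp
      then have "\<forall>i j. cf (xy_mono (k * a 1) 0 :: 'a bipoly) i j \<noteq> 0 \<longrightarrow> (i,j) \<in> Y0"
        by (simp add: mono_ideal_def)
      from this[rule_format, of "k * a 1" 0] show False by (simp add: cf_xy_mono Y0_def)
    qed
    then obtain c e where ce: "cf f c e \<noteq> 0" "e < k * b 1" by blast
    have "(xy_mono 0 1 :: 'a bipoly) \<in> mono_ideal Y0" by (rule xy_in_mono) (simp add: Y0_def)
    hence "xy_mono 0 1 \<in> colon J f" using cf' by simp
    hence "xy_mono 0 1 * f \<in> J" by (simp add: colon_def)
    moreover have "cf (xy_mono 0 1 * f) (c+0) (e+1) \<noteq> 0" using ce by (simp add: cf_xy_mono_mult)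
    ultimately have "(c, e+1) \<in> E" by (auto simp: J_def mono_ideal_def)
    hence "k * b 1 \<le> e + 1" "k * a 1 \<le> c" using d1 d3 ce(2) by auto
    moreover have "c + e = d" using hd ce(1) by (auto simp: homog_def cf_def)
    ultimately show ?thesis using add_mult_distrib2[of k "a 1" "b 1"] by linarith
  qed
  have "v_num p_y J = k * (a 1 + b 1) - 1"
    unfolding v_num_def
    by (rule Least_equality) (use hom col lower in auto)
  moreover have pp: "is_prime_ideal (p_y :: 'a bipoly set)" unfolding py_mono by (rule prime_Y0)
  hence "p_y \<in> Ass J" unfolding Ass_def using col by blast
  ultimately show ?thesis unfolding J_def E_def by simp
qed

end

theorem corollary5p4:
  fixes m :: nat and a b :: "nat \<Rightarrow> nat"
  assumes "m \<ge> 1"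
    and "\<And>i j. 1 \<le> i \<Longrightarrow> i < j \<Longrightarrow> j \<le> m \<Longrightarrow> a i > a j \<and> b i < b j"
  shows "(a m > 0 \<longrightarrow> (\<forall>k\<ge>1.
            p_x \<in> Ass (ideal_pow (I_ab m a b :: 'a::field bipoly set) k) \<and>
            v_num p_x (ideal_pow (I_ab m a b :: 'a bipoly set) k) = k * (a m + b m) - 1))
       \<and> (b 1 > 0 \<longrightarrow> (\<forall>k\<ge>1.
            p_y \<in> Ass (ideal_pow (I_ab m a b :: 'a bipoly set) k) \<and>
            v_num p_y (ideal_pow (I_ab m a b :: 'a bipoly set) k) = k * (a 1 + b 1) - 1))"
proof -
  have pw: "\<And>k. ideal_pow (I_ab m a b :: 'a bipoly set) k = mono_ideal (Ek (G1 m a b) k)"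
    by (simp only: I_ab_mono pow_mono)
  show ?thesis unfolding pw
    using x_part[where m=m and a=a and b=b, OF assms] y_part[where m=m and a=a and b=b, OF assms]
    by blast
qed

end
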